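(* A semiring $(S,+,\cdot)$ is a rectangular skew-ring if and only if it is isomorphic to a direct product of a rectangular band semiring and a skew-ring.
   Context: A semiring $(S,+,\cdot)$ is an algebra with two associative binary operations such that $a(b+c)=ab+ac$ and $(b+c)a=ba+ca$ for all $a,b,c\in S$. An element $a$ is completely regular if there is $x\in S$ with $a=a+x+a$, $a+x=x+a$ and $a(a+x)=a+x$; $S$ is completely regular if all its elements are. $\mathscr{J}^+$ denotes Green's $\mathscr{J}$-relation of the semigroup $(S,+)$. A completely simple semiring is a completely regular semiring with $\mathscr{J}^+=S\times S$. $E^+(S)$ is the set of additive idempotents of $S$. A rectangular skew-ring is a completely simple semiring $S$ such that $E^+(S)$ is a subsemigroup of $(S,+)$. A skew-ring is a semiring whose additive reduct is a (not necessarily commutative) group. A rectangular band semiring is a semiring in which $(S,\cdot)$ is a band and $(S,+)$ is a rectangular band (i.e. $a=a+x+a$ for all $a,x\in S$). Direct products of semirings carry componentwise operations. *)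

theory Defs
  imports Main
begin

record 'a srng =
  scar :: "'a set"
  sadd :: "'a \<Rightarrow> 'a \<Rightarrow> 'a"
  smul :: "'a \<Rightarrow> 'a \<Rightarrow> 'a"

definition semiring :: "'a srng \<Rightarrow> bool" where
  "semiring S \<longleftrightarrow>
     (\<forall>a\<in>scar S. \<forall>b\<in>scar S. sadd S a b \<in> scar S \<and> smul S a b \<in> scar S) \<and>
     (\<forall>a\<in>scar S. \<forall>b\<in>scar S. \<forall>c\<in>scar S.
        sadd S (sadd S a b) c = sadd S a (sadd S b c) \<and>
        smul S (smul S a b) c = smul S a (smul S b c) \<and>
        smul S a (sadd S b c) = sadd S (smul S a b) (smul S a c) \<and>
        smul S (sadd S b c) a = sadd S (smul S b a) (smul S c a))"

definition completely_regular_elem :: "'a srng \<Rightarrow> 'a \<Rightarrow> bool" where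
  "completely_regular_elem S a \<longleftrightarrow>
     (\<exists>x\<in>scar S. a = sadd S (sadd S a x) a \<and> sadd S a x = sadd S x a \<and>
                 smul S a (sadd S a x) = sadd S a x)"

definition completely_regular :: "'a srng \<Rightarrow> bool" where
  "completely_regular S \<longleftrightarrow> semiring S \<and> (\<forall>a\<in>scar S. completely_regular_elem S a)"

text \<open>Principal two-sided ideal of a in the semigroup (S,+), i.e. S^1 + a + S^1.\<close>
definition add_ideal :: "'a srng \<Rightarrow> 'a \<Rightarrow> 'a set" where
  "add_ideal S a = {a} \<union> {sadd S x a | x. x \<in> scar S} \<union> {sadd S a y | y. y \<in> scar S}
      \<union> {sadd S (sadd S x a) y | x y. x \<in> scar S \<and> y \<in> scar S}"

definition J_plus :: "'a srng \<Rightarrow> ('a \<times> 'a) set" where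
  "J_plus S = {(a, b). a \<in> scar S \<and> b \<in> scar S \<and> add_ideal S a = add_ideal S b}"

definition completely_simple :: "'a srng \<Rightarrow> bool" where
  "completely_simple S \<longleftrightarrow> completely_regular S \<and> J_plus S = scar S \<times> scar S"

definition E_plus :: "'a srng \<Rightarrow> 'a set" where
  "E_plus S = {e \<in> scar S. sadd S e e = e}"

definition rectangular_skew_ring :: "'a srng \<Rightarrow> bool" where
  "rectangular_skew_ring S \<longleftrightarrow> completely_simple S \<and>
     (\<forall>e\<in>E_plus S. \<forall>f\<in>E_plus S. sadd S e f \<in> E_plus S)"

definition skew_ring :: "'a srng \<Rightarrow> bool" where
  "skew_ring S \<longleftrightarrow> semiring S \<and>
     (\<exists>z\<in>scar S. (\<forall>a\<in>scar S. sadd S z a = a \<and> sadd S a z = a) \<and>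
                 (\<forall>a\<in>scar S. \<exists>b\<in>scar S. sadd S a b = z \<and> sadd S b a = z))"

definition rectangular_band_semiring :: "'a srng \<Rightarrow> bool" where
  "rectangular_band_semiring S \<longleftrightarrow> semiring S \<and>
     (\<forall>a\<in>scar S. smul S a a = a) \<and>
     (\<forall>a\<in>scar S. \<forall>x\<in>scar S. sadd S (sadd S a x) a = a)"

definition direct_prod :: "'b srng \<Rightarrow> 'c srng \<Rightarrow> ('b \<times> 'c) srng" where
  "direct_prod B R = \<lparr> scar = scar B \<times> scar R,
     sadd = (\<lambda>(b1, r1) (b2, r2). (sadd B b1 b2, sadd R r1 r2)),
     smul = (\<lambda>(b1, r1) (b2, r2). (smul B b1 b2, smul R r1 r2)) \<rparr>"

definition srng_iso :: "'a srng \<Rightarrow> 'b srng \<Rightarrow> bool" where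
  "srng_iso S T \<longleftrightarrow> (\<exists>f. bij_betw f (scar S) (scar T) \<and>
     (\<forall>a\<in>scar S. \<forall>b\<in>scar S. f (sadd S a b) = sadd T (f a) (f b) \<and>
                             f (smul S a b) = smul T (f a) (f b)))"

end

theory Submission
  imports Defs
begin

locale rsr =
  fixes S :: "'a srng"
  assumes sr: "semiring S" and rs: "rectangular_skew_ring S"
begin
abbreviation P (infixl "\<oplus>" 65) where "a \<oplus> b \<equiv> sadd S a b"
abbreviation M (infixl "\<odot>" 70) where "a \<odot> b \<equiv> smul S a b"

lemma cl[simp]: "a \<in> scar S \<Longrightarrow> b \<in> scar S \<Longrightarrow> a \<oplus> b \<in> scar S"
  "a \<in> scar S \<Longrightarrow> b \<in> scar S \<Longrightarrow> a \<odot> b \<in> scar S"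
  using sr unfolding semiring_def by auto

lemma as[simp]: "a \<in> scar S \<Longrightarrow> b \<in> scar S \<Longrightarrow> c \<in> scar S \<Longrightarrow> a \<oplus> b \<oplus> c = a \<oplus> (b \<oplus> c)"
  "a \<in> scar S \<Longrightarrow> b \<in> scar S \<Longrightarrow> c \<in> scar S \<Longrightarrow> a \<odot> b \<odot> c = a \<odot> (b \<odot> c)"
  using sr unfolding semiring_def by auto

lemma ds: "a \<in> scar S \<Longrightarrow> b \<in> scar S \<Longrightarrow> c \<in> scar S \<Longrightarrow> a \<odot> (b \<oplus> c) = a \<odot> b \<oplus> a \<odot> c"
  "a \<in> scar S \<Longrightarrow> b \<in> scar S \<Longrightarrow> c \<in> scar S \<Longrightarrow> (b \<oplus> c) \<odot> a = b \<odot> a \<oplus> c \<odot> a"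
  using sr unfolding semiring_def by auto

lemma idl: "x \<in> scar S \<Longrightarrow> e \<in> scar S \<Longrightarrow> e \<oplus> e = e \<Longrightarrow> e \<oplus> (e \<oplus> x) = e \<oplus> x"
  by (simp flip: as)

definition xx where "xx a = (SOME x. x\<in>scar S \<and> a = a\<oplus>x\<oplus>a \<and> a\<oplus>x = x\<oplus>a \<and> a\<odot>(a\<oplus>x) = a\<oplus>x)"
definition z where "z a = a \<oplus> xx a"

lemma xx: assumes "a \<in> scar S" shows "xx a \<in> scar S" "a \<oplus> (xx a \<oplus> a) = a" "a \<oplus> xx a = xx a \<oplus> a"
  "a \<odot> (a \<oplus> xx a) = a \<oplus> xx a"
proof -
  have "completely_regular_elem S a" using rs assms unfolding rectangular_skew_ring_def
      completely_simple_def completely_regular_def by auto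
  then have "\<exists>x. x\<in>scar S \<and> a = a\<oplus>x\<oplus>a \<and> a\<oplus>x = x\<oplus>a \<and> a\<odot>(a\<oplus>x) = a\<oplus>x"
    unfolding completely_regular_elem_def by auto
  from someI_ex[OF this] have h: "xx a \<in> scar S" "a = a \<oplus> xx a \<oplus> a" "a \<oplus> xx a = xx a \<oplus> a"
  "a \<odot> (a \<oplus> xx a) = a \<oplus> xx a" unfolding xx_def[symmetric] by auto
  show "xx a \<in> scar S" "a \<oplus> xx a = xx a \<oplus> a" "a \<odot> (a \<oplus> xx a) = a \<oplus> xx a" using h by auto
  show "a \<oplus> (xx a \<oplus> a) = a" using h(1,2) assms as(1) by metis
qed

lemma z[simp]: assumes "a \<in> scar S" shows "z a \<in> scar S" "z a \<oplus> a = a" "a \<oplus> z a = a"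
  "z a \<oplus> z a = z a" "a \<odot> z a = z a"
proof -
  note h = xx[OF assms]
  show 1: "z a \<in> scar S" using h assms unfolding z_def by simp
  show 2: "z a \<oplus> a = a" using h assms unfolding z_def by (metis as(1))
  show "a \<oplus> z a = a" using h assms unfolding z_def by metis
  show "z a \<oplus> z a = z a" using h assms 2 1 unfolding z_def by (metis as(1))
  show "a \<odot> z a = z a" using h unfolding z_def by metis
qed

lemma zE[simp]: "a \<in> scar S \<Longrightarrow> z a \<in> E_plus S" unfolding E_plus_def by simp

lemma zl[simp]: assumes "a \<in> scar S" "b \<in> scar S" shows "z a \<oplus> (a \<oplus> b) = a \<oplus> b" "a \<oplus> (z a \<oplus> b) = a \<oplus> b"
  using assms by (simp_all flip: as)

lemma zx: assumes "a \<in> scar S" shows "z a = xx a \<oplus> a" using xx[OF assms] unfolding z_def by simp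

lemma Jl: assumes "a \<in> scar S" "b \<in> scar S" shows "\<exists>u\<in>scar S. \<exists>v\<in>scar S. b = u \<oplus> a \<oplus> v"
proof -
  have "(a,b) \<in> J_plus S" using rs assms unfolding rectangular_skew_ring_def completely_simple_def by auto
  then have "b \<in> add_ideal S a" unfolding J_plus_def add_ideal_def by auto
  then consider "b = a" | x where "x \<in> scar S" "b = x \<oplus> a" | y where "y \<in> scar S" "b = a \<oplus> y"
    | x y where "x \<in> scar S" "y \<in> scar S" "b = x \<oplus> a \<oplus> y" unfolding add_ideal_def by auto
  then show ?thesis
  proof cases
    case 1 then show ?thesis using assms by (intro bexI[of _ "z a"]) auto
  next
    case 2 then show ?thesis using assms by (intro bexI[of _ "x"] bexI[of _ "z a"]) auto
  next
    case 3 then show ?thesis using assms by (intro bexI[of _ "z a"] bexI[of _ "y"]) auto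
  qed auto
qed

lemma prim: assumes e: "e \<in> E_plus S" and g: "g \<in> E_plus S" and eg: "e \<oplus> g = g" and ge: "g \<oplus> e = g"
  shows "g = e"
proof -
  have eS: "e \<in> scar S" "e \<oplus> e = e" and gS: "g \<in> scar S" "g \<oplus> g = g" using e g unfolding E_plus_def by auto
  obtain u v where uv: "u \<in> scar S" "v \<in> scar S" "e = u \<oplus> g \<oplus> v" using Jl[OF gS(1) eS(1)] by auto
  define a where "a = e \<oplus> u \<oplus> g"
  define b where "b = g \<oplus> v \<oplus> e"
  have aS: "a \<in> scar S" "b \<in> scar S" using a_def b_def uv eS gS by auto
  have ag: "a \<oplus> g = a" unfolding a_def using uv eS gS by (simp add: as[symmetric, of u g g])
  have ab: "a \<oplus> b = e"
  proof -
    have "a \<oplus> b = e \<oplus> (u \<oplus> (g \<oplus> g) \<oplus> v) \<oplus> e" unfolding a_def b_def using uv(1,2) eS gS by (simp add: idl)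
    also have "\<dots> = e \<oplus> e \<oplus> e" using uv gS by (simp flip: as)
    finally show ?thesis using eS by simp
  qed
  have e1: "e = z a \<oplus> e" using ab aS by (metis as(1) z(1,2))
  have za: "z a = z a \<oplus> g" using zx[OF aS(1)] ag aS gS xx[OF aS(1)] by (metis as(1))
  have "g = z a \<oplus> e \<oplus> g" using e1 eg by simp
  also have "\<dots> = z a" using za eg aS eS gS by simp
  finally have "g = z a" .
  then show ?thesis using e1 ge by simp
qed

lemma ES[simp]: "e \<in> E_plus S \<Longrightarrow> e \<in> scar S" unfolding E_plus_def by simp
lemma Eidem: "e \<in> E_plus S \<Longrightarrow> e \<oplus> e = e" unfolding E_plus_def by simp
lemma Eadd[simp]: "e \<in> E_plus S \<Longrightarrow> f \<in> E_plus S \<Longrightarrow> e \<oplus> f \<in> E_plus S"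
  using rs unfolding rectangular_skew_ring_def by auto
lemma Emul[simp]: "e \<in> E_plus S \<Longrightarrow> s \<in> scar S \<Longrightarrow> e \<odot> s \<in> E_plus S"
  "e \<in> E_plus S \<Longrightarrow> s \<in> scar S \<Longrightarrow> s \<odot> e \<in> E_plus S"
  unfolding E_plus_def by (auto, metis ds ES Eidem, metis ds ES Eidem)

lemma rect: assumes "e \<in> E_plus S" "f \<in> E_plus S" shows "e \<oplus> (f \<oplus> e) = e"
proof -
  have g: "e \<oplus> f \<oplus> e \<in> E_plus S" using assms by simp
  have ee: "e \<oplus> e = e" using Eidem[OF assms(1)] .
  have "e \<oplus> (e \<oplus> f \<oplus> e) = e \<oplus> f \<oplus> e" using assms ee by (simp add: idl)
  moreover have "e \<oplus> f \<oplus> e \<oplus> e = e \<oplus> f \<oplus> e" using assms ee by (metis as(1) cl(1) ES)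
  ultimately have "e \<oplus> f \<oplus> e = e" by (rule prim[OF assms(1) g])
  then show ?thesis using assms by simp
qed

lemma rect3: assumes "e \<in> E_plus S" "f \<in> E_plus S" "g \<in> E_plus S" shows "e \<oplus> (f \<oplus> g) = e \<oplus> g"
proof -
  have "e \<oplus> (f \<oplus> g) = e \<oplus> (f \<oplus> (g \<oplus> (e \<oplus> g)))" using rect[OF assms(3,1)] by simp
  also have "\<dots> = (e \<oplus> ((f \<oplus> g) \<oplus> e)) \<oplus> g" using assms by simp
  also have "\<dots> = e \<oplus> g" using rect[of e "f \<oplus> g"] assms by simp
  finally show ?thesis .
qed

lemma Mlem[simp]: assumes "e \<in> E_plus S" "w \<in> scar S" "v \<in> scar S" shows "w \<oplus> (e \<oplus> v) = w \<oplus> v"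
proof -
  have "w \<oplus> (e \<oplus> v) = w \<oplus> (z w \<oplus> (e \<oplus> (z v \<oplus> v)))" using assms by simp
  also have "\<dots> = w \<oplus> ((z w \<oplus> (e \<oplus> z v)) \<oplus> v)" using assms by simp
  also have "\<dots> = w \<oplus> ((z w \<oplus> z v) \<oplus> v)" using assms rect3[of "z w" e "z v"] by simp
  also have "\<dots> = w \<oplus> v" using assms by simp
  finally show ?thesis .
qed

lemma Zeq: assumes "e \<in> E_plus S" "c \<in> scar S" "e \<oplus> c = c" "c \<oplus> e = c" shows "z c = e"
proof -
  have 1: "e \<oplus> z c = z c" unfolding z_def using assms xx(1)[OF assms(2)] by (metis as(1) ES)
  have 2: "z c \<oplus> e = z c" unfolding zx[OF assms(2)] using assms xx(1)[OF assms(2)] by (metis as(1) ES)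
  have "e = e \<oplus> (z c \<oplus> e)" using rect[of e "z c"] assms by simp
  also have "\<dots> = z c" using 1 2 assms by (metis as(1) ES z(1))
  finally show ?thesis by simp
qed

lemma zE'[simp]: "e \<in> E_plus S \<Longrightarrow> z e = e"
  by (rule Zeq) (auto simp: Eidem)

lemma zadd: assumes "a \<in> scar S" "b \<in> scar S" shows "z (a \<oplus> b) = z a \<oplus> z b"
  by (rule Zeq) (use assms in auto)

lemma zmul: assumes a: "a \<in> scar S" and b: "b \<in> scar S" shows "z (a \<odot> b) = z a \<odot> z b"
proof (rule Zeq)
  have "a \<odot> b = (z a \<oplus> a) \<odot> (z b \<oplus> b)" using assms by simp
  also have "\<dots> = z a \<odot> z b \<oplus> (a \<odot> z b \<oplus> (z a \<odot> b \<oplus> a \<odot> b))" using assms by (simp only: ds cl z(1) as)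
  also have "\<dots> = z a \<odot> z b \<oplus> a \<odot> b" using assms by simp
  finally show "z a \<odot> z b \<oplus> a \<odot> b = a \<odot> b" by simp
  have "a \<odot> b = (a \<oplus> z a) \<odot> (b \<oplus> z b)" using assms by simp
  also have "\<dots> = a \<odot> b \<oplus> (z a \<odot> b \<oplus> (a \<odot> z b \<oplus> z a \<odot> z b))" using assms by (simp only: ds cl z(1) as)
  also have "\<dots> = a \<odot> b \<oplus> z a \<odot> z b" using assms by simp
  finally show "a \<odot> b \<oplus> z a \<odot> z b = a \<odot> b" by simp
qed (use assms in auto)

lemma forward: assumes c: "c \<in> scar S"
  shows "\<exists>(B :: 'a srng) (R :: 'a srng). rectangular_band_semiring B \<and> skew_ring R \<and>
                srng_iso S (direct_prod B R)"
proof -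
  define e0 where "e0 = z c"
  have e0[simp]: "e0 \<in> E_plus S" unfolding e0_def using c by simp
  define G where "G = {t \<in> scar S. e0 \<oplus> t = t \<and> t \<oplus> e0 = t}"
  define B where "B = \<lparr>scar = E_plus S, sadd = sadd S, smul = smul S\<rparr>"
  define R where "R = \<lparr>scar = G, sadd = sadd S, smul = (\<lambda>p q. e0 \<oplus> (p \<odot> q \<oplus> e0))\<rparr>"
  define f where "f = (\<lambda>a. (z a, e0 \<oplus> (a \<oplus> e0)))"
  have eS[simp]: "e0 \<in> scar S" by simp
  have G1[simp]: "t \<in> G \<longleftrightarrow> t \<in> scar S \<and> e0 \<oplus> t = t \<and> t \<oplus> e0 = t" for t unfolding G_def by simp
  have GI: "e0 \<oplus> (a \<oplus> e0) \<in> G" if "a \<in> scar S" for a using that by simp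
  have Gl: "e0 \<oplus> (t \<oplus> x) = t \<oplus> x" if "t \<in> G" "x \<in> scar S" for t x
    using that by (metis G1 as(1) eS)
  have B: "rectangular_band_semiring B"
    unfolding rectangular_band_semiring_def semiring_def B_def
    using Eidem zE' z(5) ES by (auto simp: ds; metis)
  have Rad: "sadd R a b \<in> scar R" "smul R a b \<in> scar R" if "a \<in> scar R" "b \<in> scar R" for a b
    using that unfolding R_def by (auto simp: Gl intro!: GI)
  have Rlaws: "sadd R (sadd R a b) cc = sadd R a (sadd R b cc) \<and>
        smul R (smul R a b) cc = smul R a (smul R b cc) \<and>
        smul R a (sadd R b cc) = sadd R (smul R a b) (smul R a cc) \<and>
        smul R (sadd R b cc) a = sadd R (smul R b a) (smul R cc a)"
    if abc: "a \<in> scar R" "b \<in> scar R" "cc \<in> scar R" for a b cc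
  proof -
    from abc have abcS: "a \<in> scar S" "b \<in> scar S" "cc \<in> scar S" unfolding R_def by auto
    show ?thesis unfolding R_def using abcS by (simp add: ds)
  qed
  have R: "skew_ring R"
    unfolding skew_ring_def
  proof (intro conjI)
    show "semiring R" unfolding semiring_def using Rad Rlaws by blast
    show "\<exists>zz\<in>scar R. (\<forall>a\<in>scar R. sadd R zz a = a \<and> sadd R a zz = a) \<and>
                 (\<forall>a\<in>scar R. \<exists>b\<in>scar R. sadd R a b = zz \<and> sadd R b a = zz)"
    proof -
      have e0R: "e0 \<in> scar R" unfolding R_def by (simp add: Eidem)
      have idR: "sadd R e0 a = a \<and> sadd R a e0 = a" if "a \<in> scar R" for a
        using that unfolding R_def by auto
      have invR: "\<exists>b\<in>scar R. sadd R a b = e0 \<and> sadd R b a = e0" if a: "a \<in> scar R" for a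
      proof -
        from a have aS: "a \<in> scar S" "e0 \<oplus> a = a" "a \<oplus> e0 = a" unfolding R_def by auto
        have za: "z a = e0" by (rule Zeq) (use aS in auto)
        have 1: "e0 \<oplus> (xx a \<oplus> e0) \<in> scar R" unfolding R_def using GI xx(1)[OF aS(1)] by simp
        have "a \<oplus> (e0 \<oplus> (xx a \<oplus> e0)) = z a \<oplus> e0" unfolding z_def using aS xx(1)[OF aS(1)] by simp
        then have 2: "sadd R a (e0 \<oplus> (xx a \<oplus> e0)) = e0" unfolding R_def using za by (simp add: Eidem)
        have "e0 \<oplus> (xx a \<oplus> e0) \<oplus> a = e0 \<oplus> z a" unfolding zx[OF aS(1)] using aS xx(1)[OF aS(1)] by simp
        then have 3: "sadd R (e0 \<oplus> (xx a \<oplus> e0)) a = e0" unfolding R_def using za by (simp add: Eidem)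
        show ?thesis using 1 2 3 by blast
      qed
      show ?thesis using e0R idR invR by blast
    qed
  qed
  have iso: "srng_iso S (direct_prod B R)"
    unfolding srng_iso_def
  proof (intro exI[of _ f] conjI ballI)
    show "bij_betw f (scar S) (scar (direct_prod B R))"
      unfolding bij_betw_def
    proof
      show "inj_on f (scar S)"
      proof (rule inj_onI)
        fix a b assume ab: "a \<in> scar S" "b \<in> scar S" "f a = f b"
        have r: "x = z x \<oplus> ((e0 \<oplus> (x \<oplus> e0)) \<oplus> z x)" if "x \<in> scar S" for x using that by simp
        show "a = b" using r[OF ab(1)] r[OF ab(2)] ab(3) unfolding f_def by (metis prod.inject)
      qed
      show "f ` scar S = scar (direct_prod B R)"
      proof
        show "f ` scar S \<subseteq> scar (direct_prod B R)" unfolding f_def direct_prod_def B_def R_def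
          using GI by auto
        show "scar (direct_prod B R) \<subseteq> f ` scar S"
        proof
          fix p assume "p \<in> scar (direct_prod B R)"
          then obtain e t where p: "p = (e, t)" "e \<in> E_plus S" "t \<in> G"
            unfolding direct_prod_def B_def R_def by auto
          have tS: "t \<in> scar S" "e0 \<oplus> t = t" "t \<oplus> e0 = t" using p by auto
          define a where "a = e \<oplus> (t \<oplus> e)"
          have aS: "a \<in> scar S" unfolding a_def using p tS by simp
          have "z a = e" by (rule Zeq) (use p tS aS in \<open>auto simp: a_def\<close>)
          moreover have "e0 \<oplus> (a \<oplus> e0) = t" unfolding a_def using p tS by (simp add: Gl)
          ultimately have "f a = p" unfolding f_def p by simp
          then show "p \<in> f ` scar S" using aS by blast
        qed
      qed
    qed
    fix a b assume ab: "a \<in> scar S" "b \<in> scar S"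
    show "f (a \<oplus> b) = sadd (direct_prod B R) (f a) (f b)"
      unfolding f_def direct_prod_def B_def R_def using ab by (simp add: zadd)
    show "f (a \<odot> b) = smul (direct_prod B R) (f a) (f b)"
      unfolding f_def direct_prod_def B_def R_def using ab by (simp add: zmul ds)
  qed
  show ?thesis using B R iso by blast
qed

end
locale conv =
  fixes S :: "'a srng" and B :: "'b srng" and R :: "'c srng" and f :: "'a \<Rightarrow> 'b \<times> 'c"
  assumes sS: "semiring S" and bB: "rectangular_band_semiring B" and rR: "skew_ring R"
    and bij: "bij_betw f (scar S) (scar B \<times> scar R)"
    and fadd: "\<And>a c. a \<in> scar S \<Longrightarrow> c \<in> scar S \<Longrightarrow> f (sadd S a c) = (sadd B (fst (f a)) (fst (f c)), sadd R (snd (f a)) (snd (f c)))"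
    and fmul: "\<And>a c. a \<in> scar S \<Longrightarrow> c \<in> scar S \<Longrightarrow> f (smul S a c) = (smul B (fst (f a)) (fst (f c)), smul R (snd (f a)) (snd (f c)))"
begin

lemma Scl[simp]: "a \<in> scar S \<Longrightarrow> b \<in> scar S \<Longrightarrow> sadd S a b \<in> scar S"
  "a \<in> scar S \<Longrightarrow> b \<in> scar S \<Longrightarrow> smul S a b \<in> scar S"
  using sS unfolding semiring_def by auto

lemma Bcl[simp]: "a \<in> scar B \<Longrightarrow> b \<in> scar B \<Longrightarrow> sadd B a b \<in> scar B"
  "a \<in> scar B \<Longrightarrow> b \<in> scar B \<Longrightarrow> smul B a b \<in> scar B"
  using bB unfolding semiring_def rectangular_band_semiring_def by auto
lemma Bas: "a \<in> scar B \<Longrightarrow> b \<in> scar B \<Longrightarrow> c \<in> scar B \<Longrightarrow> sadd B (sadd B a b) c = sadd B a (sadd B b c)"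
  using bB unfolding semiring_def rectangular_band_semiring_def by auto
lemma Brect[simp]: "a \<in> scar B \<Longrightarrow> x \<in> scar B \<Longrightarrow> sadd B (sadd B a x) a = a"
  "a \<in> scar B \<Longrightarrow> smul B a a = a"
  using bB unfolding rectangular_band_semiring_def by auto
lemma Bidem[simp]: "a \<in> scar B \<Longrightarrow> sadd B a a = a"
proof -
  assume a: "a \<in> scar B"
  have "a = sadd B (sadd B a (sadd B a a)) a" using a by simp
  also have "\<dots> = sadd B (sadd B (sadd B a a) a) a" by (simp only: Bas[OF a a a])
  also have "\<dots> = sadd B a a" using a by simp
  finally show ?thesis by simp
qed

lemma Rcl[simp]: "a \<in> scar R \<Longrightarrow> b \<in> scar R \<Longrightarrow> sadd R a b \<in> scar R"
  "a \<in> scar R \<Longrightarrow> b \<in> scar R \<Longrightarrow> smul R a b \<in> scar R"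
  using rR unfolding semiring_def skew_ring_def by auto
lemma Ras: "a \<in> scar R \<Longrightarrow> b \<in> scar R \<Longrightarrow> c \<in> scar R \<Longrightarrow> sadd R (sadd R a b) c = sadd R a (sadd R b c)"
  using rR unfolding semiring_def skew_ring_def by auto
lemma Rds: "a \<in> scar R \<Longrightarrow> b \<in> scar R \<Longrightarrow> c \<in> scar R \<Longrightarrow> smul R a (sadd R b c) = sadd R (smul R a b) (smul R a c)"
  using rR unfolding semiring_def skew_ring_def by auto

definition "zr = (SOME z. z\<in>scar R \<and> (\<forall>a\<in>scar R. sadd R z a = a \<and> sadd R a z = a) \<and>
                 (\<forall>a\<in>scar R. \<exists>b\<in>scar R. sadd R a b = z \<and> sadd R b a = z))"

lemma zr: "zr \<in> scar R" "\<And>a. a\<in>scar R \<Longrightarrow> sadd R zr a = a" "\<And>a. a\<in>scar R \<Longrightarrow> sadd R a zr = a"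
  "\<And>a. a\<in>scar R \<Longrightarrow> \<exists>b\<in>scar R. sadd R a b = zr \<and> sadd R b a = zr"
proof -
  have "\<exists>z. z\<in>scar R \<and> (\<forall>a\<in>scar R. sadd R z a = a \<and> sadd R a z = a) \<and>
                 (\<forall>a\<in>scar R. \<exists>b\<in>scar R. sadd R a b = z \<and> sadd R b a = z)"
    using rR unfolding skew_ring_def by blast
  from someI_ex[OF this, folded zr_def]
  show "zr \<in> scar R" "\<And>a. a\<in>scar R \<Longrightarrow> sadd R zr a = a" "\<And>a. a\<in>scar R \<Longrightarrow> sadd R a zr = a"
  "\<And>a. a\<in>scar R \<Longrightarrow> \<exists>b\<in>scar R. sadd R a b = zr \<and> sadd R b a = zr" by auto
qed

definition "ng a = (SOME b. b\<in>scar R \<and> sadd R a b = zr \<and> sadd R b a = zr)"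
lemma ng: assumes "a \<in> scar R" shows "ng a \<in> scar R" "sadd R a (ng a) = zr" "sadd R (ng a) a = zr"
proof -
  have "\<exists>b. b\<in>scar R \<and> sadd R a b = zr \<and> sadd R b a = zr" using zr(4)[OF assms] by blast
  from someI_ex[OF this, folded ng_def] show "ng a \<in> scar R" "sadd R a (ng a) = zr" "sadd R (ng a) a = zr" by auto
qed

lemma Ridem: assumes "r \<in> scar R" "sadd R r r = r" shows "r = zr"
proof -
  have "zr = sadd R (ng r) r" by (rule ng(3)[OF assms(1), symmetric])
  also have "\<dots> = sadd R (ng r) (sadd R r r)" using assms(2) by simp
  also have "\<dots> = sadd R (sadd R (ng r) r) r" by (simp only: Ras[OF ng(1)[OF assms(1)] assms(1) assms(1)])
  also have "\<dots> = r" using assms ng zr by simp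
  finally show ?thesis by simp
qed

lemma Rm0: assumes "r \<in> scar R" shows "smul R r zr = zr"
  by (rule Ridem) (use assms zr in \<open>auto simp flip: Rds\<close>)

lemma fin: "a \<in> scar S \<Longrightarrow> fst (f a) \<in> scar B \<and> snd (f a) \<in> scar R"
  using bij unfolding bij_betw_def by (metis SigmaE image_eqI prod.sel)

definition "g = inv_into (scar S) f"
lemma g: assumes "b \<in> scar B" "r \<in> scar R" shows "g (b, r) \<in> scar S" "f (g (b, r)) = (b, r)"
  using bij assms unfolding g_def bij_betw_def by (auto intro: inv_into_into f_inv_into_f)

lemma finj: "a \<in> scar S \<Longrightarrow> c \<in> scar S \<Longrightarrow> f a = f c \<Longrightarrow> a = c"
  using bij unfolding bij_betw_def inj_on_def by blast

lemma fpair: assumes "a \<in> scar S" obtains b r where "f a = (b, r)" "b \<in> scar B" "r \<in> scar R"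
  using fin[OF assms] by (metis prod.collapse)

lemma creg: assumes a: "a \<in> scar S" shows "completely_regular_elem S a"
proof -
  obtain b r where fa: "f a = (b, r)" "b \<in> scar B" "r \<in> scar R" using fpair[OF a] .
  define x where "x = g (b, ng r)"
  have x: "x \<in> scar S" "f x = (b, ng r)" unfolding x_def using g fa ng by auto
  have 1: "f (sadd S a x) = (b, zr)" using fa x a ng by (simp add: fadd)
  have 2: "f (sadd S x a) = (b, zr)" using fa x a ng by (simp add: fadd)
  have 3: "f (sadd S (sadd S a x) a) = f a" using 1 fa x a zr by (simp add: fadd)
  have 4: "f (smul S a (sadd S a x)) = (b, zr)" using 1 fa x a zr Rm0 by (simp add: fmul)
  have e3: "a = sadd S (sadd S a x) a" using finj[of "sadd S (sadd S a x) a" a] 3 x a by simp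
  have e1: "sadd S a x = sadd S x a" using finj[of "sadd S a x" "sadd S x a"] 1 2 x a by simp
  have e4: "smul S a (sadd S a x) = sadd S a x" using finj[of "smul S a (sadd S a x)" "sadd S a x"] 1 4 x a by simp
  show ?thesis unfolding completely_regular_elem_def
    using x(1) e1 e3 e4 by blast
qed

lemma ai: assumes a: "a \<in> scar S" shows "add_ideal S a = scar S"
proof
  show "add_ideal S a \<subseteq> scar S" unfolding add_ideal_def using a by auto
  show "scar S \<subseteq> add_ideal S a"
  proof
    fix c assume c: "c \<in> scar S"
    obtain b r where fa: "f a = (b, r)" "b \<in> scar B" "r \<in> scar R" using fpair[OF a] .
    obtain b' r' where fc: "f c = (b', r')" "b' \<in> scar B" "r' \<in> scar R" using fpair[OF c] .
    define u where "u = g (b', sadd R r' (ng r))"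
    define v where "v = g (b', zr)"
    have u: "u \<in> scar S" "f u = (b', sadd R r' (ng r))" unfolding u_def using g fa fc ng by auto
    have v: "v \<in> scar S" "f v = (b', zr)" unfolding v_def using g fa fc zr by auto
    have "sadd R (sadd R r' (ng r)) r = r'" using fa fc ng zr by (simp add: Ras)
    then have "f (sadd S (sadd S u a) v) = f c" using u v fa fc a zr by (simp add: fadd)
    then have "c = sadd S (sadd S u a) v" using finj u v a c by auto
    then show "c \<in> add_ideal S a" unfolding add_ideal_def using u v by blast
  qed
qed

lemma Eclosed: assumes "e \<in> E_plus S" "h \<in> E_plus S" shows "sadd S e h \<in> E_plus S"
proof -
  have e: "e \<in> scar S" "sadd S e e = e" and h: "h \<in> scar S" "sadd S h h = h" using assms unfolding E_plus_def by auto
  obtain b r where fe: "f e = (b, r)" "b \<in> scar B" "r \<in> scar R" using fpair[OF e(1)] .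
  obtain b' r' where fh: "f h = (b', r')" "b' \<in> scar B" "r' \<in> scar R" using fpair[OF h(1)] .
  have "r = zr" using Ridem[OF fe(3)] e fe fadd[OF e(1) e(1)] by simp
  moreover have "r' = zr" using Ridem[OF fh(3)] h fh fadd[OF h(1) h(1)] by simp
  ultimately have fe': "f e = (b, zr)" and fh': "f h = (b', zr)" using fe fh by auto
  have "sadd B (sadd B b b') (sadd B b b') = sadd B (sadd B (sadd B b b') b) b'" using fe fh by (simp add: Bas)
  also have "\<dots> = sadd B b b'" using fe fh by (simp add: Bas)
  finally have bb: "sadd B (sadd B b b') (sadd B b b') = sadd B b b'" .
  have "f (sadd S (sadd S e h) (sadd S e h)) = f (sadd S e h)" using e h fe' fh' zr bb by (simp add: fadd)
  then have "sadd S (sadd S e h) (sadd S e h) = sadd S e h" using finj e h by simp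
  then show ?thesis unfolding E_plus_def using e h by simp
qed

lemma result: "rectangular_skew_ring S"
  unfolding rectangular_skew_ring_def completely_simple_def completely_regular_def
  using sS creg Eclosed ai unfolding J_plus_def by auto
end

lemma empty_case:
  fixes S :: "'a srng"
  assumes "scar S = {}"
  shows "\<exists>(B :: 'a srng) (R :: 'a srng). rectangular_band_semiring B \<and> skew_ring R \<and>
                srng_iso S (direct_prod B R)"
proof -
  define B :: "'a srng" where "B = \<lparr>scar = {}, sadd = (\<lambda>a b. a), smul = (\<lambda>a b. a)\<rparr>"
  define R :: "'a srng" where "R = \<lparr>scar = {undefined}, sadd = (\<lambda>a b. undefined), smul = (\<lambda>a b. undefined)\<rparr>"
  have "rectangular_band_semiring B" unfolding B_def rectangular_band_semiring_def semiring_def by simp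
  moreover have "skew_ring R" unfolding R_def skew_ring_def semiring_def by simp
  moreover have "srng_iso S (direct_prod B R)" unfolding srng_iso_def direct_prod_def B_def
    using assms by (auto intro!: exI[of _ "\<lambda>x. (undefined, undefined)"] simp: bij_betw_def)
  ultimately show ?thesis by blast
qed

theorem theorem3p3:
  fixes S :: "'a srng"
  assumes "semiring S"
  shows "(rectangular_skew_ring S \<longrightarrow>
            (\<exists>(B :: 'a srng) (R :: 'a srng). rectangular_band_semiring B \<and> skew_ring R \<and>
                srng_iso S (direct_prod B R)))
       \<and> (\<forall>(B :: 'b srng) (R :: 'c srng). rectangular_band_semiring B \<and> skew_ring R \<and>
                srng_iso S (direct_prod B R) \<longrightarrow> rectangular_skew_ring S)"
proof (intro conjI impI allI)
  assume rs: "rectangular_skew_ring S"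
  show "\<exists>(B :: 'a srng) (R :: 'a srng). rectangular_band_semiring B \<and> skew_ring R \<and>
                srng_iso S (direct_prod B R)"
  proof (cases "scar S = {}")
    case True
    then show ?thesis by (rule empty_case)
  next
    case False
    then obtain c where c: "c \<in> scar S" by blast
    interpret rsr S using assms rs by unfold_locales
    show ?thesis using forward[OF c] .
  qed
next
  fix B :: "'b srng" and R :: "'c srng"
  assume h: "rectangular_band_semiring B \<and> skew_ring R \<and> srng_iso S (direct_prod B R)"
  then obtain f where f: "bij_betw f (scar S) (scar (direct_prod B R))"
    "\<forall>a\<in>scar S. \<forall>b\<in>scar S. f (sadd S a b) = sadd (direct_prod B R) (f a) (f b) \<and>
                             f (smul S a b) = smul (direct_prod B R) (f a) (f b)"
    unfolding srng_iso_def by blast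
  interpret conv S B R f
  proof
    show "semiring S" by (rule assms)
    show "rectangular_band_semiring B" "skew_ring R" using h by auto
    show "bij_betw f (scar S) (scar B \<times> scar R)" using f(1) by (simp add: direct_prod_def)
    show "\<And>a c. a \<in> scar S \<Longrightarrow> c \<in> scar S \<Longrightarrow> f (sadd S a c) = (sadd B (fst (f a)) (fst (f c)), sadd R (snd (f a)) (snd (f c)))"
      using f(2) by (simp add: direct_prod_def split_beta)
    show "\<And>a c. a \<in> scar S \<Longrightarrow> c \<in> scar S \<Longrightarrow> f (smul S a c) = (smul B (fst (f a)) (fst (f c)), smul R (snd (f a)) (snd (f c)))"
      using f(2) by (simp add: direct_prod_def split_beta)
  qed
  show "rectangular_skew_ring S" by (rule result)
qed

end
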